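(* There exist $K_3$-WORM-colorable $K_4$-free graphs $G$ such that $W^-(G,K_3)=3$.
   Context: A $K_3$-WORM coloring of a graph $G$ is an assignment of colors to the vertices of $G$ such that the three vertices of every triangle of $G$ receive exactly two distinct colors. $G$ is $K_3$-WORM-colorable if it has such a coloring, and then $W^-(G,K_3)$ is the minimum number of colors used in a $K_3$-WORM coloring of $G$. A graph is $K_4$-free if it contains no subgraph isomorphic to $K_4$. *)

theory Defs
  imports Main
begin

definition simple_graph :: "'a set \<Rightarrow> ('a \<Rightarrow> 'a \<Rightarrow> bool) \<Rightarrow> bool" where
  "simple_graph V E \<longleftrightarrow> finite V \<and>
     (\<forall>x y. E x y \<longrightarrow> x \<in> V \<and> y \<in> V \<and> x \<noteq> y \<and> E y x)"

definition triangle :: "'a set \<Rightarrow> ('a \<Rightarrow> 'a \<Rightarrow> bool) \<Rightarrow> 'a \<Rightarrow> 'a \<Rightarrow> 'a \<Rightarrow> bool" where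
  "triangle V E a b c \<longleftrightarrow> a \<in> V \<and> b \<in> V \<and> c \<in> V \<and> E a b \<and> E b c \<and> E a c"

definition K4_free :: "'a set \<Rightarrow> ('a \<Rightarrow> 'a \<Rightarrow> bool) \<Rightarrow> bool" where
  "K4_free V E \<longleftrightarrow> \<not> (\<exists>a\<in>V. \<exists>b\<in>V. \<exists>c\<in>V. \<exists>d\<in>V.
      E a b \<and> E a c \<and> E a d \<and> E b c \<and> E b d \<and> E c d)"

definition K3_worm_coloring :: "'a set \<Rightarrow> ('a \<Rightarrow> 'a \<Rightarrow> bool) \<Rightarrow> ('a \<Rightarrow> nat) \<Rightarrow> bool" where
  "K3_worm_coloring V E col \<longleftrightarrow>
     (\<forall>a b c. triangle V E a b c \<longrightarrow> card {col a, col b, col c} = 2)"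

definition K3_worm_colorable :: "'a set \<Rightarrow> ('a \<Rightarrow> 'a \<Rightarrow> bool) \<Rightarrow> bool" where
  "K3_worm_colorable V E \<longleftrightarrow> (\<exists>col. K3_worm_coloring V E col)"

definition W_minus_K3 :: "'a set \<Rightarrow> ('a \<Rightarrow> 'a \<Rightarrow> bool) \<Rightarrow> nat" where
  "W_minus_K3 V E = (LEAST k. \<exists>col. K3_worm_coloring V E col \<and> card (col ` V) = k)"

end

theory Submission
  imports Defs
begin

definition Nb :: "nat list list" where "Nb = [[1,8,9,13,15,16],[0,2,3,5,10,14,16],[1,3,4,6,10,11,15],[1,2,4,5,7,11,12,16],[2,3,5,6,8,13],[1,3,4,6,7,9,13,14],[2,4,5,7,8,10,14],[3,5,6,8,9,11],[0,4,6,7,9,10,12,16],[0,5,7,8,11,13],[1,2,6,8,11,12,14],[2,3,7,9,10,12,15],[3,8,10,11,13,14,16],[0,4,5,9,12,14,15],[1,5,6,10,12,13,15,16],[0,2,11,13,14,16],[0,1,3,8,12,14,15]]"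

definition EE :: "nat \<Rightarrow> nat \<Rightarrow> bool" where "EE x y = (x < 17 \<and> y \<in> set (Nb ! x))"

definition cl :: "nat \<Rightarrow> nat" where "cl i = [0,1,1,0,0,1,1,0,1,1,0,1,1,0,0,2,0] ! i"

definition VV :: "nat set" where "VV = {0..<17}"

lemma tri_lem: "card {x,y,z} = (2::nat) \<Longrightarrow> x\<in>{p,q} \<Longrightarrow> y\<in>{p,q} \<Longrightarrow> z\<in>{p,q} \<Longrightarrow> \<not>((x=p)=(y=p) \<and> (y=p)=(z=p))"
  by auto

lemma no2:
  assumes "\<forall>a b c. triangle VV EE a b c \<longrightarrow> card {col a, col b, col c} = 2"
  and "col ` VV \<subseteq> {p,q}"
  and pq: "p \<noteq> q"
  shows False
proof -
  have vp: "\<forall>i<17. col i \<in> {p,q}" using assms(2) by (auto simp: VV_def image_subset_iff)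
  have t0: "\<not> ((col 0 = p) = (col 1 = p) \<and> (col 1 = p) = (col 16 = p))"
  proof -
    have "triangle VV EE 0 1 16" by (simp add: triangle_def EE_def Nb_def VV_def)
    hence "card {col 0, col 1, col 16} = 2" using assms(1) by blast
    thus ?thesis by (rule tri_lem[where q=q, OF _ vp[rule_format] vp[rule_format] vp[rule_format]]) simp_all
  qed
  have t1: "\<not> ((col 0 = p) = (col 8 = p) \<and> (col 8 = p) = (col 9 = p))"
  proof -
    have "triangle VV EE 0 8 9" by (simp add: triangle_def EE_def Nb_def VV_def)
    hence "card {col 0, col 8, col 9} = 2" using assms(1) by blast
    thus ?thesis by (rule tri_lem[where q=q, OF _ vp[rule_format] vp[rule_format] vp[rule_format]]) simp_all
  qed
  have t2: "\<not> ((col 0 = p) = (col 8 = p) \<and> (col 8 = p) = (col 16 = p))"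
  proof -
    have "triangle VV EE 0 8 16" by (simp add: triangle_def EE_def Nb_def VV_def)
    hence "card {col 0, col 8, col 16} = 2" using assms(1) by blast
    thus ?thesis by (rule tri_lem[where q=q, OF _ vp[rule_format] vp[rule_format] vp[rule_format]]) simp_all
  qed
  have t3: "\<not> ((col 0 = p) = (col 9 = p) \<and> (col 9 = p) = (col 13 = p))"
  proof -
    have "triangle VV EE 0 9 13" by (simp add: triangle_def EE_def Nb_def VV_def)
    hence "card {col 0, col 9, col 13} = 2" using assms(1) by blast
    thus ?thesis by (rule tri_lem[where q=q, OF _ vp[rule_format] vp[rule_format] vp[rule_format]]) simp_all
  qed
  have t4: "\<not> ((col 0 = p) = (col 13 = p) \<and> (col 13 = p) = (col 15 = p))"
  proof -
    have "triangle VV EE 0 13 15" by (simp add: triangle_def EE_def Nb_def VV_def)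
    hence "card {col 0, col 13, col 15} = 2" using assms(1) by blast
    thus ?thesis by (rule tri_lem[where q=q, OF _ vp[rule_format] vp[rule_format] vp[rule_format]]) simp_all
  qed
  have t5: "\<not> ((col 0 = p) = (col 15 = p) \<and> (col 15 = p) = (col 16 = p))"
  proof -
    have "triangle VV EE 0 15 16" by (simp add: triangle_def EE_def Nb_def VV_def)
    hence "card {col 0, col 15, col 16} = 2" using assms(1) by blast
    thus ?thesis by (rule tri_lem[where q=q, OF _ vp[rule_format] vp[rule_format] vp[rule_format]]) simp_all
  qed
  have t6: "\<not> ((col 1 = p) = (col 2 = p) \<and> (col 2 = p) = (col 3 = p))"
  proof -
    have "triangle VV EE 1 2 3" by (simp add: triangle_def EE_def Nb_def VV_def)
    hence "card {col 1, col 2, col 3} = 2" using assms(1) by blast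
    thus ?thesis by (rule tri_lem[where q=q, OF _ vp[rule_format] vp[rule_format] vp[rule_format]]) simp_all
  qed
  have t7: "\<not> ((col 1 = p) = (col 2 = p) \<and> (col 2 = p) = (col 10 = p))"
  proof -
    have "triangle VV EE 1 2 10" by (simp add: triangle_def EE_def Nb_def VV_def)
    hence "card {col 1, col 2, col 10} = 2" using assms(1) by blast
    thus ?thesis by (rule tri_lem[where q=q, OF _ vp[rule_format] vp[rule_format] vp[rule_format]]) simp_all
  qed
  have t8: "\<not> ((col 1 = p) = (col 3 = p) \<and> (col 3 = p) = (col 5 = p))"
  proof -
    have "triangle VV EE 1 3 5" by (simp add: triangle_def EE_def Nb_def VV_def)
    hence "card {col 1, col 3, col 5} = 2" using assms(1) by blast
    thus ?thesis by (rule tri_lem[where q=q, OF _ vp[rule_format] vp[rule_format] vp[rule_format]]) simp_all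
  qed
  have t9: "\<not> ((col 1 = p) = (col 3 = p) \<and> (col 3 = p) = (col 16 = p))"
  proof -
    have "triangle VV EE 1 3 16" by (simp add: triangle_def EE_def Nb_def VV_def)
    hence "card {col 1, col 3, col 16} = 2" using assms(1) by blast
    thus ?thesis by (rule tri_lem[where q=q, OF _ vp[rule_format] vp[rule_format] vp[rule_format]]) simp_all
  qed
  have t10: "\<not> ((col 1 = p) = (col 5 = p) \<and> (col 5 = p) = (col 14 = p))"
  proof -
    have "triangle VV EE 1 5 14" by (simp add: triangle_def EE_def Nb_def VV_def)
    hence "card {col 1, col 5, col 14} = 2" using assms(1) by blast
    thus ?thesis by (rule tri_lem[where q=q, OF _ vp[rule_format] vp[rule_format] vp[rule_format]]) simp_all
  qed
  have t11: "\<not> ((col 1 = p) = (col 10 = p) \<and> (col 10 = p) = (col 14 = p))"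
  proof -
    have "triangle VV EE 1 10 14" by (simp add: triangle_def EE_def Nb_def VV_def)
    hence "card {col 1, col 10, col 14} = 2" using assms(1) by blast
    thus ?thesis by (rule tri_lem[where q=q, OF _ vp[rule_format] vp[rule_format] vp[rule_format]]) simp_all
  qed
  have t12: "\<not> ((col 1 = p) = (col 14 = p) \<and> (col 14 = p) = (col 16 = p))"
  proof -
    have "triangle VV EE 1 14 16" by (simp add: triangle_def EE_def Nb_def VV_def)
    hence "card {col 1, col 14, col 16} = 2" using assms(1) by blast
    thus ?thesis by (rule tri_lem[where q=q, OF _ vp[rule_format] vp[rule_format] vp[rule_format]]) simp_all
  qed
  have t13: "\<not> ((col 2 = p) = (col 3 = p) \<and> (col 3 = p) = (col 4 = p))"
  proof -
    have "triangle VV EE 2 3 4" by (simp add: triangle_def EE_def Nb_def VV_def)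
    hence "card {col 2, col 3, col 4} = 2" using assms(1) by blast
    thus ?thesis by (rule tri_lem[where q=q, OF _ vp[rule_format] vp[rule_format] vp[rule_format]]) simp_all
  qed
  have t14: "\<not> ((col 2 = p) = (col 3 = p) \<and> (col 3 = p) = (col 11 = p))"
  proof -
    have "triangle VV EE 2 3 11" by (simp add: triangle_def EE_def Nb_def VV_def)
    hence "card {col 2, col 3, col 11} = 2" using assms(1) by blast
    thus ?thesis by (rule tri_lem[where q=q, OF _ vp[rule_format] vp[rule_format] vp[rule_format]]) simp_all
  qed
  have t15: "\<not> ((col 2 = p) = (col 4 = p) \<and> (col 4 = p) = (col 6 = p))"
  proof -
    have "triangle VV EE 2 4 6" by (simp add: triangle_def EE_def Nb_def VV_def)
    hence "card {col 2, col 4, col 6} = 2" using assms(1) by blast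
    thus ?thesis by (rule tri_lem[where q=q, OF _ vp[rule_format] vp[rule_format] vp[rule_format]]) simp_all
  qed
  have t16: "\<not> ((col 2 = p) = (col 6 = p) \<and> (col 6 = p) = (col 10 = p))"
  proof -
    have "triangle VV EE 2 6 10" by (simp add: triangle_def EE_def Nb_def VV_def)
    hence "card {col 2, col 6, col 10} = 2" using assms(1) by blast
    thus ?thesis by (rule tri_lem[where q=q, OF _ vp[rule_format] vp[rule_format] vp[rule_format]]) simp_all
  qed
  have t17: "\<not> ((col 2 = p) = (col 10 = p) \<and> (col 10 = p) = (col 11 = p))"
  proof -
    have "triangle VV EE 2 10 11" by (simp add: triangle_def EE_def Nb_def VV_def)
    hence "card {col 2, col 10, col 11} = 2" using assms(1) by blast
    thus ?thesis by (rule tri_lem[where q=q, OF _ vp[rule_format] vp[rule_format] vp[rule_format]]) simp_all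
  qed
  have t18: "\<not> ((col 2 = p) = (col 11 = p) \<and> (col 11 = p) = (col 15 = p))"
  proof -
    have "triangle VV EE 2 11 15" by (simp add: triangle_def EE_def Nb_def VV_def)
    hence "card {col 2, col 11, col 15} = 2" using assms(1) by blast
    thus ?thesis by (rule tri_lem[where q=q, OF _ vp[rule_format] vp[rule_format] vp[rule_format]]) simp_all
  qed
  have t19: "\<not> ((col 3 = p) = (col 4 = p) \<and> (col 4 = p) = (col 5 = p))"
  proof -
    have "triangle VV EE 3 4 5" by (simp add: triangle_def EE_def Nb_def VV_def)
    hence "card {col 3, col 4, col 5} = 2" using assms(1) by blast
    thus ?thesis by (rule tri_lem[where q=q, OF _ vp[rule_format] vp[rule_format] vp[rule_format]]) simp_all
  qed
  have t20: "\<not> ((col 3 = p) = (col 5 = p) \<and> (col 5 = p) = (col 7 = p))"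
  proof -
    have "triangle VV EE 3 5 7" by (simp add: triangle_def EE_def Nb_def VV_def)
    hence "card {col 3, col 5, col 7} = 2" using assms(1) by blast
    thus ?thesis by (rule tri_lem[where q=q, OF _ vp[rule_format] vp[rule_format] vp[rule_format]]) simp_all
  qed
  have t21: "\<not> ((col 3 = p) = (col 7 = p) \<and> (col 7 = p) = (col 11 = p))"
  proof -
    have "triangle VV EE 3 7 11" by (simp add: triangle_def EE_def Nb_def VV_def)
    hence "card {col 3, col 7, col 11} = 2" using assms(1) by blast
    thus ?thesis by (rule tri_lem[where q=q, OF _ vp[rule_format] vp[rule_format] vp[rule_format]]) simp_all
  qed
  have t22: "\<not> ((col 3 = p) = (col 11 = p) \<and> (col 11 = p) = (col 12 = p))"
  proof -
    have "triangle VV EE 3 11 12" by (simp add: triangle_def EE_def Nb_def VV_def)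
    hence "card {col 3, col 11, col 12} = 2" using assms(1) by blast
    thus ?thesis by (rule tri_lem[where q=q, OF _ vp[rule_format] vp[rule_format] vp[rule_format]]) simp_all
  qed
  have t23: "\<not> ((col 3 = p) = (col 12 = p) \<and> (col 12 = p) = (col 16 = p))"
  proof -
    have "triangle VV EE 3 12 16" by (simp add: triangle_def EE_def Nb_def VV_def)
    hence "card {col 3, col 12, col 16} = 2" using assms(1) by blast
    thus ?thesis by (rule tri_lem[where q=q, OF _ vp[rule_format] vp[rule_format] vp[rule_format]]) simp_all
  qed
  have t24: "\<not> ((col 4 = p) = (col 5 = p) \<and> (col 5 = p) = (col 6 = p))"
  proof -
    have "triangle VV EE 4 5 6" by (simp add: triangle_def EE_def Nb_def VV_def)
    hence "card {col 4, col 5, col 6} = 2" using assms(1) by blast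
    thus ?thesis by (rule tri_lem[where q=q, OF _ vp[rule_format] vp[rule_format] vp[rule_format]]) simp_all
  qed
  have t25: "\<not> ((col 4 = p) = (col 5 = p) \<and> (col 5 = p) = (col 13 = p))"
  proof -
    have "triangle VV EE 4 5 13" by (simp add: triangle_def EE_def Nb_def VV_def)
    hence "card {col 4, col 5, col 13} = 2" using assms(1) by blast
    thus ?thesis by (rule tri_lem[where q=q, OF _ vp[rule_format] vp[rule_format] vp[rule_format]]) simp_all
  qed
  have t26: "\<not> ((col 4 = p) = (col 6 = p) \<and> (col 6 = p) = (col 8 = p))"
  proof -
    have "triangle VV EE 4 6 8" by (simp add: triangle_def EE_def Nb_def VV_def)
    hence "card {col 4, col 6, col 8} = 2" using assms(1) by blast
    thus ?thesis by (rule tri_lem[where q=q, OF _ vp[rule_format] vp[rule_format] vp[rule_format]]) simp_all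
  qed
  have t27: "\<not> ((col 5 = p) = (col 6 = p) \<and> (col 6 = p) = (col 7 = p))"
  proof -
    have "triangle VV EE 5 6 7" by (simp add: triangle_def EE_def Nb_def VV_def)
    hence "card {col 5, col 6, col 7} = 2" using assms(1) by blast
    thus ?thesis by (rule tri_lem[where q=q, OF _ vp[rule_format] vp[rule_format] vp[rule_format]]) simp_all
  qed
  have t28: "\<not> ((col 5 = p) = (col 6 = p) \<and> (col 6 = p) = (col 14 = p))"
  proof -
    have "triangle VV EE 5 6 14" by (simp add: triangle_def EE_def Nb_def VV_def)
    hence "card {col 5, col 6, col 14} = 2" using assms(1) by blast
    thus ?thesis by (rule tri_lem[where q=q, OF _ vp[rule_format] vp[rule_format] vp[rule_format]]) simp_all
  qed
  have t29: "\<not> ((col 5 = p) = (col 7 = p) \<and> (col 7 = p) = (col 9 = p))"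
  proof -
    have "triangle VV EE 5 7 9" by (simp add: triangle_def EE_def Nb_def VV_def)
    hence "card {col 5, col 7, col 9} = 2" using assms(1) by blast
    thus ?thesis by (rule tri_lem[where q=q, OF _ vp[rule_format] vp[rule_format] vp[rule_format]]) simp_all
  qed
  have t30: "\<not> ((col 5 = p) = (col 9 = p) \<and> (col 9 = p) = (col 13 = p))"
  proof -
    have "triangle VV EE 5 9 13" by (simp add: triangle_def EE_def Nb_def VV_def)
    hence "card {col 5, col 9, col 13} = 2" using assms(1) by blast
    thus ?thesis by (rule tri_lem[where q=q, OF _ vp[rule_format] vp[rule_format] vp[rule_format]]) simp_all
  qed
  have t31: "\<not> ((col 5 = p) = (col 13 = p) \<and> (col 13 = p) = (col 14 = p))"
  proof -
    have "triangle VV EE 5 13 14" by (simp add: triangle_def EE_def Nb_def VV_def)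
    hence "card {col 5, col 13, col 14} = 2" using assms(1) by blast
    thus ?thesis by (rule tri_lem[where q=q, OF _ vp[rule_format] vp[rule_format] vp[rule_format]]) simp_all
  qed
  have t32: "\<not> ((col 6 = p) = (col 7 = p) \<and> (col 7 = p) = (col 8 = p))"
  proof -
    have "triangle VV EE 6 7 8" by (simp add: triangle_def EE_def Nb_def VV_def)
    hence "card {col 6, col 7, col 8} = 2" using assms(1) by blast
    thus ?thesis by (rule tri_lem[where q=q, OF _ vp[rule_format] vp[rule_format] vp[rule_format]]) simp_all
  qed
  have t33: "\<not> ((col 6 = p) = (col 8 = p) \<and> (col 8 = p) = (col 10 = p))"
  proof -
    have "triangle VV EE 6 8 10" by (simp add: triangle_def EE_def Nb_def VV_def)
    hence "card {col 6, col 8, col 10} = 2" using assms(1) by blast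
    thus ?thesis by (rule tri_lem[where q=q, OF _ vp[rule_format] vp[rule_format] vp[rule_format]]) simp_all
  qed
  have t34: "\<not> ((col 6 = p) = (col 10 = p) \<and> (col 10 = p) = (col 14 = p))"
  proof -
    have "triangle VV EE 6 10 14" by (simp add: triangle_def EE_def Nb_def VV_def)
    hence "card {col 6, col 10, col 14} = 2" using assms(1) by blast
    thus ?thesis by (rule tri_lem[where q=q, OF _ vp[rule_format] vp[rule_format] vp[rule_format]]) simp_all
  qed
  have t35: "\<not> ((col 7 = p) = (col 8 = p) \<and> (col 8 = p) = (col 9 = p))"
  proof -
    have "triangle VV EE 7 8 9" by (simp add: triangle_def EE_def Nb_def VV_def)
    hence "card {col 7, col 8, col 9} = 2" using assms(1) by blast
    thus ?thesis by (rule tri_lem[where q=q, OF _ vp[rule_format] vp[rule_format] vp[rule_format]]) simp_all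
  qed
  have t36: "\<not> ((col 7 = p) = (col 9 = p) \<and> (col 9 = p) = (col 11 = p))"
  proof -
    have "triangle VV EE 7 9 11" by (simp add: triangle_def EE_def Nb_def VV_def)
    hence "card {col 7, col 9, col 11} = 2" using assms(1) by blast
    thus ?thesis by (rule tri_lem[where q=q, OF _ vp[rule_format] vp[rule_format] vp[rule_format]]) simp_all
  qed
  have t37: "\<not> ((col 8 = p) = (col 10 = p) \<and> (col 10 = p) = (col 12 = p))"
  proof -
    have "triangle VV EE 8 10 12" by (simp add: triangle_def EE_def Nb_def VV_def)
    hence "card {col 8, col 10, col 12} = 2" using assms(1) by blast
    thus ?thesis by (rule tri_lem[where q=q, OF _ vp[rule_format] vp[rule_format] vp[rule_format]]) simp_all
  qed
  have t38: "\<not> ((col 8 = p) = (col 12 = p) \<and> (col 12 = p) = (col 16 = p))"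
  proof -
    have "triangle VV EE 8 12 16" by (simp add: triangle_def EE_def Nb_def VV_def)
    hence "card {col 8, col 12, col 16} = 2" using assms(1) by blast
    thus ?thesis by (rule tri_lem[where q=q, OF _ vp[rule_format] vp[rule_format] vp[rule_format]]) simp_all
  qed
  have t39: "\<not> ((col 10 = p) = (col 11 = p) \<and> (col 11 = p) = (col 12 = p))"
  proof -
    have "triangle VV EE 10 11 12" by (simp add: triangle_def EE_def Nb_def VV_def)
    hence "card {col 10, col 11, col 12} = 2" using assms(1) by blast
    thus ?thesis by (rule tri_lem[where q=q, OF _ vp[rule_format] vp[rule_format] vp[rule_format]]) simp_all
  qed
  have t40: "\<not> ((col 10 = p) = (col 12 = p) \<and> (col 12 = p) = (col 14 = p))"
  proof -
    have "triangle VV EE 10 12 14" by (simp add: triangle_def EE_def Nb_def VV_def)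
    hence "card {col 10, col 12, col 14} = 2" using assms(1) by blast
    thus ?thesis by (rule tri_lem[where q=q, OF _ vp[rule_format] vp[rule_format] vp[rule_format]]) simp_all
  qed
  have t41: "\<not> ((col 12 = p) = (col 13 = p) \<and> (col 13 = p) = (col 14 = p))"
  proof -
    have "triangle VV EE 12 13 14" by (simp add: triangle_def EE_def Nb_def VV_def)
    hence "card {col 12, col 13, col 14} = 2" using assms(1) by blast
    thus ?thesis by (rule tri_lem[where q=q, OF _ vp[rule_format] vp[rule_format] vp[rule_format]]) simp_all
  qed
  have t42: "\<not> ((col 12 = p) = (col 14 = p) \<and> (col 14 = p) = (col 16 = p))"
  proof -
    have "triangle VV EE 12 14 16" by (simp add: triangle_def EE_def Nb_def VV_def)
    hence "card {col 12, col 14, col 16} = 2" using assms(1) by blast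
    thus ?thesis by (rule tri_lem[where q=q, OF _ vp[rule_format] vp[rule_format] vp[rule_format]]) simp_all
  qed
  have t43: "\<not> ((col 13 = p) = (col 14 = p) \<and> (col 14 = p) = (col 15 = p))"
  proof -
    have "triangle VV EE 13 14 15" by (simp add: triangle_def EE_def Nb_def VV_def)
    hence "card {col 13, col 14, col 15} = 2" using assms(1) by blast
    thus ?thesis by (rule tri_lem[where q=q, OF _ vp[rule_format] vp[rule_format] vp[rule_format]]) simp_all
  qed
  have t44: "\<not> ((col 14 = p) = (col 15 = p) \<and> (col 15 = p) = (col 16 = p))"
  proof -
    have "triangle VV EE 14 15 16" by (simp add: triangle_def EE_def Nb_def VV_def)
    hence "card {col 14, col 15, col 16} = 2" using assms(1) by blast
    thus ?thesis by (rule tri_lem[where q=q, OF _ vp[rule_format] vp[rule_format] vp[rule_format]]) simp_all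
  qed
  show False using t0 t1 t2 t3 t4 t5 t6 t7 t8 t9 t10 t11 t12 t13 t14 t15 t16 t17 t18 t19 t20 t21 t22 t23 t24 t25 t26 t27 t28 t29 t30 t31 t32 t33 t34 t35 t36 t37 t38 t39 t40 t41 t42 t43 t44 by sat
qed


lemma c1: "list_all (\<lambda>x. list_all (\<lambda>y. y < 17 \<and> y \<noteq> x \<and> x \<in> set (Nb ! y)) (Nb ! x)) [0..<17]"
  unfolding Nb_def by code_simp

lemma c2: "list_all (\<lambda>a. list_all (\<lambda>b. list_all (\<lambda>c. c \<in> set (Nb!b) \<longrightarrow> list_all (\<lambda>d. \<not>(d \<in> set (Nb!b) \<and> d \<in> set (Nb!c))) (Nb!a)) (Nb!a)) (Nb!a)) [0..<17]"
  unfolding Nb_def by code_simp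

lemma card2: "\<not>(x = y \<and> y = z) \<Longrightarrow> (x = y \<or> y = z \<or> x = z) \<Longrightarrow> card {x,y,z} = (2::nat)"
  by (auto simp: card_insert_if)

lemma c3: "list_all (\<lambda>a. list_all (\<lambda>b. list_all (\<lambda>c. c \<in> set (Nb!b) \<longrightarrow> (\<not>(cl a = cl b \<and> cl b = cl c) \<and> (cl a = cl b \<or> cl b = cl c \<or> cl a = cl c))) (Nb!a)) (Nb!a)) [0..<17]"
  unfolding Nb_def cl_def by code_simp

lemma c4a: "list_all (\<lambda>i. cl i \<in> {0,1,2}) [0..<17]"
  unfolding cl_def by code_simp

lemma c4: "cl ` VV = {0,1,2}"
proof
  show "cl ` VV \<subseteq> {0,1,2}" using c4a by (auto simp: VV_def list_all_iff)
  have "cl 0 = 0" "cl 1 = 1" "cl 15 = 2" by (simp_all add: cl_def)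
  moreover have "(0::nat) \<in> VV" "(1::nat) \<in> VV" "(15::nat) \<in> VV" by (simp_all add: VV_def)
  ultimately show "{0,1,2} \<subseteq> cl ` VV" by (metis empty_subsetI image_eqI insert_subset)
qed

lemma two_sub: "finite (A::nat set) \<Longrightarrow> card A \<le> 2 \<Longrightarrow> \<exists>p q. p \<noteq> q \<and> A \<subseteq> {p,q}"
proof -
  assume f: "finite A" and c: "card A \<le> 2"
  have "card A = 0 \<or> card A = 1 \<or> card A = 2" using c by auto
  thus ?thesis
  proof (elim disjE)
    assume "card A = 0" hence "A = {}" using f by simp
    thus ?thesis by (intro exI[of _ 0] exI[of _ 1]) auto
  next
    assume "card A = 1" then obtain x where "A = {x}" by (auto simp: card_1_singleton_iff)
    thus ?thesis by (intro exI[of _ x] exI[of _ "Suc x"]) auto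
  next
    assume "card A = 2" then obtain x y where "A = {x,y}" "x \<noteq> y" by (auto simp: card_2_iff)
    thus ?thesis by blast
  qed
qed

lemma la: "list_all P xs \<Longrightarrow> x \<in> set xs \<Longrightarrow> P x" by (simp add: list_all_iff)

lemma EE_nb: "EE x y \<Longrightarrow> x < 17 \<and> y \<in> set (Nb ! x)" by (simp add: EE_def)

lemma sg_edge: "EE x y \<Longrightarrow> x \<in> VV \<and> y \<in> VV \<and> x \<noteq> y \<and> EE y x"
proof -
  assume e: "EE x y"
  hence x: "x < 17" and y: "y \<in> set (Nb ! x)" by (auto simp: EE_def)
  have xin: "x \<in> set [0..<17]" using x by simp
  have P1: "list_all (\<lambda>y. y < 17 \<and> y \<noteq> x \<and> x \<in> set (Nb ! y)) (Nb ! x)"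
    by (rule la[OF c1 xin])
  have "y < 17 \<and> y \<noteq> x \<and> x \<in> set (Nb ! y)" by (rule la[OF P1 y])
  thus "x \<in> VV \<and> y \<in> VV \<and> x \<noteq> y \<and> EE y x" using x by (auto simp: VV_def EE_def)
qed

lemma sg: "simple_graph VV EE"
  unfolding simple_graph_def using sg_edge by (auto simp: VV_def)

lemma k4: "K4_free VV EE"
  unfolding K4_free_def
proof (intro notI, elim bexE conjE)
  fix a b c d assume "EE a b" "EE a c" "EE a d" "EE b c" "EE b d" "EE c d"
  hence h: "a < 17" "b \<in> set (Nb!a)" "c \<in> set (Nb!a)" "d \<in> set (Nb!a)"
     "c \<in> set (Nb!b)" "d \<in> set (Nb!b)" "d \<in> set (Nb!c)" by (auto simp: EE_def)
  have "list_all (\<lambda>b. list_all (\<lambda>c. c \<in> set (Nb!b) \<longrightarrow> list_all (\<lambda>d. \<not>(d \<in> set (Nb!b) \<and> d \<in> set (Nb!c))) (Nb!a)) (Nb!a)) (Nb!a)"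
    by (rule la[OF c2]) (use h(1) in simp)
  hence "list_all (\<lambda>c. c \<in> set (Nb!b) \<longrightarrow> list_all (\<lambda>d. \<not>(d \<in> set (Nb!b) \<and> d \<in> set (Nb!c))) (Nb!a)) (Nb!a)"
    by (rule la) (rule h(2))
  hence "c \<in> set (Nb!b) \<longrightarrow> list_all (\<lambda>d. \<not>(d \<in> set (Nb!b) \<and> d \<in> set (Nb!c))) (Nb!a)"
    by (rule la) (rule h(3))
  hence "list_all (\<lambda>d. \<not>(d \<in> set (Nb!b) \<and> d \<in> set (Nb!c))) (Nb!a)" using h(5) by blast
  hence "\<not>(d \<in> set (Nb!b) \<and> d \<in> set (Nb!c))" by (rule la) (rule h(4))
  thus False using h(6,7) by blast
qed

lemma worm: "K3_worm_coloring VV EE cl"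
  unfolding K3_worm_coloring_def
proof (intro allI impI)
  fix a b c assume "triangle VV EE a b c"
  hence h: "a < 17" "b \<in> set (Nb!a)" "c \<in> set (Nb!a)" "c \<in> set (Nb!b)"
    by (auto simp: triangle_def EE_def)
  have "list_all (\<lambda>b. list_all (\<lambda>c. c \<in> set (Nb!b) \<longrightarrow> (\<not>(cl a = cl b \<and> cl b = cl c) \<and> (cl a = cl b \<or> cl b = cl c \<or> cl a = cl c))) (Nb!a)) (Nb!a)"
    by (rule la[OF c3]) (use h(1) in simp)
  hence "list_all (\<lambda>c. c \<in> set (Nb!b) \<longrightarrow> (\<not>(cl a = cl b \<and> cl b = cl c) \<and> (cl a = cl b \<or> cl b = cl c \<or> cl a = cl c))) (Nb!a)"
    by (rule la) (rule h(2))
  hence "c \<in> set (Nb!b) \<longrightarrow> (\<not>(cl a = cl b \<and> cl b = cl c) \<and> (cl a = cl b \<or> cl b = cl c \<or> cl a = cl c))"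
    by (rule la) (rule h(3))
  hence W: "\<not>(cl a = cl b \<and> cl b = cl c) \<and> (cl a = cl b \<or> cl b = cl c \<or> cl a = cl c)" using h(4) by blast
  show "card {cl a, cl b, cl c} = 2" by (rule card2[OF conjunct1[OF W] conjunct2[OF W]])
qed

theorem mainTheorem5:
  shows "\<exists>(V :: nat set) E. simple_graph V E \<and> K4_free V E \<and>
           K3_worm_colorable V E \<and> W_minus_K3 V E = 3"
proof (intro exI conjI)
  show "simple_graph VV EE" by (rule sg)
  show "K4_free VV EE" by (rule k4)
  show "K3_worm_colorable VV EE" using worm by (auto simp: K3_worm_colorable_def)
  show "W_minus_K3 VV EE = 3"
    unfolding W_minus_K3_def
  proof (rule Least_equality)
    show "\<exists>col. K3_worm_coloring VV EE col \<and> card (col ` VV) = 3"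
      by (rule exI[of _ cl]) (simp add: worm c4)
  next
    fix k assume "\<exists>col. K3_worm_coloring VV EE col \<and> card (col ` VV) = k"
    then obtain col where w: "K3_worm_coloring VV EE col" and ck: "card (col ` VV) = k" by blast
    show "3 \<le> k"
    proof (rule ccontr)
      assume "\<not> 3 \<le> k"
      hence "card (col ` VV) \<le> 2" using ck by simp
      moreover have "finite (col ` VV)" by (simp add: VV_def)
      ultimately obtain p q where "p \<noteq> q" "col ` VV \<subseteq> {p,q}" using two_sub by blast
      thus False using no2[of col p q] w unfolding K3_worm_coloring_def by blast
    qed
  qed
qed

end
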